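(* Let $\theta\in\mathbb{R}$, let $\mathcal{A}_\theta$ be the smooth noncommutative torus, let $\tau\in\mathbb{C}$ with $\Im\tau>0$, and let $p\in\mathcal{A}_\theta$ be a projection ($p=p^2=p^*$) satisfying at least one of the equations $$\bar{\partial}_{(\tau)}(p)\,p=0,\qquad p\,\partial_{(\tau)}(p)=0,\qquad \partial_{(\tau)}(p)\,p=0,\qquad p\,\bar{\partial}_{(\tau)}(p)=0 .$$ Then $p$ satisfies the field equation $$p\,\Delta(p)-\Delta(p)\,p=0,$$ where $\Delta=g^{\mu\nu}\partial_\mu\partial_\nu$.
   Context: $\mathcal{A}_\theta$ is the unital $*$-algebra of series $a=\sum_{(m,n)\in\mathbb{Z}^2}a_{mn}U_1^mU_2^n$ with $(a_{mn})$ a complex Schwartz (rapidly decreasing) sequence on $\mathbb{Z}^2$, where $U_1,U_2$ are unitaries with $U_2U_1=e^{2\pi i\theta}U_1U_2$. The derivations $\partial_1,\partial_2$ of $\mathcal{A}_\theta$ are defined by $\partial_\mu(U_\nu)=2\pi i\,\delta_\mu^\nu U_\nu$ ($\mu,\nu=1,2$), extended by the Leibniz rule and linearity. The inverse metric associated with $\tau$ is $(g^{\mu\nu})=\frac{1}{(\Im\tau)^2}\begin{pmatrix}|\tau|^2&-\Re\tau\\-\Re\tau&1\end{pmatrix}$, repeated indices summed over $1,2$. The derivations $\partial_{(\tau)}=\frac{1}{\tau-\bar\tau}(-\bar\tau\partial_1+\partial_2)$ and $\bar\partial_{(\tau)}=\frac{1}{\tau-\bar\tau}(\tau\partial_1-\partial_2)$.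 *)

theory Defs
  imports "HOL-Analysis.Analysis"
begin

text \<open>Elements of the smooth noncommutative torus A_theta are represented by their
coefficient sequences a :: int \<times> int \<Rightarrow> complex, where a (m,n) is the coefficient of
U1^m U2^n; they are required to be rapidly decreasing (Schwartz).\<close>

type_synonym nct = "int \<times> int \<Rightarrow> complex"

definition schwartz :: "nct \<Rightarrow> bool" where
  "schwartz a \<longleftrightarrow>
     (\<forall>k::nat. \<exists>C::real. \<forall>m n. (1 + real_of_int (\<bar>m\<bar> + \<bar>n\<bar>)) ^ k * cmod (a (m, n)) \<le> C)"

text \<open>Product: using U2^k U1^m = e^{2 pi i theta k m} U1^m U2^k,
  (U1^j U2^k)(U1^m' U2^n') = e^{2 pi i theta k m'} U1^(j+m') U2^(k+n').\<close>
definition nct_mult :: "real \<Rightarrow> nct \<Rightarrow> nct \<Rightarrow> nct" where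
  "nct_mult \<theta> a b = (\<lambda>(m, n). infsum (\<lambda>(j, k). a (j, k) * b (m - j, n - k)
        * cis (2 * pi * \<theta> * real_of_int (k * (m - j)))) UNIV)"

text \<open>Involution: (U1^m U2^n)^* = U2^(-n) U1^(-m) = e^{2 pi i theta m n} U1^(-m) U2^(-n).\<close>
definition nct_star :: "real \<Rightarrow> nct \<Rightarrow> nct" where
  "nct_star \<theta> a = (\<lambda>(m, n). cnj (a (- m, - n)) * cis (2 * pi * \<theta> * real_of_int (m * n)))"

text \<open>Basic derivations: partial_mu (U_nu) = 2 pi i delta_mu^nu U_nu (mu = 1, 2).\<close>
definition nct_partial :: "nat \<Rightarrow> nct \<Rightarrow> nct" where
  "nct_partial \<mu> a = (\<lambda>(m, n). 2 * of_real pi * \<i> * of_int (if \<mu> = 1 then m else n) * a (m, n))"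

definition dtau :: "complex \<Rightarrow> nct \<Rightarrow> nct" where
  "dtau \<tau> a = (\<lambda>x. (1 / (\<tau> - cnj \<tau>)) * (- cnj \<tau> * nct_partial 1 a x + nct_partial 2 a x))"

definition dbartau :: "complex \<Rightarrow> nct \<Rightarrow> nct" where
  "dbartau \<tau> a = (\<lambda>x. (1 / (\<tau> - cnj \<tau>)) * (\<tau> * nct_partial 1 a x - nct_partial 2 a x))"

definition ginv :: "complex \<Rightarrow> nat \<Rightarrow> nat \<Rightarrow> real" where
  "ginv \<tau> \<mu> \<nu> = (1 / (Im \<tau>)\<^sup>2) *
     (if \<mu> = 1 \<and> \<nu> = 1 then (cmod \<tau>)\<^sup>2 else if \<mu> = 2 \<and> \<nu> = 2 then 1 else - Re \<tau>)"

definition nct_laplacian :: "complex \<Rightarrow> nct \<Rightarrow> nct" where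
  "nct_laplacian \<tau> a = (\<lambda>x. \<Sum>\<mu>\<in>{1,2}. \<Sum>\<nu>\<in>{1,2}.
      of_real (ginv \<tau> \<mu> \<nu>) * nct_partial \<mu> (nct_partial \<nu> a) x)"

end

theory Submission
  imports Defs
begin


definition u2 :: "int \<Rightarrow> real" where "u2 j = 1 / (1 + real_of_int \<bar>j\<bar>)^2"

lemma u2_nat_summable: "(\<lambda>n::nat. 1 / (1 + real n)^2) summable_on UNIV"
proof -
  have "summable (\<lambda>n::nat. inverse (real n ^ 2))" by (rule inverse_power_summable) simp
  hence "summable (\<lambda>n::nat. inverse (real (Suc n) ^ 2))" by (subst summable_Suc_iff)
  hence "summable (\<lambda>n::nat. norm (1 / (1 + real n)^2))"
    by (simp add: inverse_eq_divide add.commute)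
  thus ?thesis by (rule norm_summable_imp_summable_on)
qed

lemma u2_summable: "u2 summable_on UNIV"
proof -
  have U: "(UNIV::int set) = range int \<union> range (\<lambda>n. - int n)"
    by (auto simp: image_def) (metis add.inverse_inverse nonneg_int_cases zero_le_imp_eq_int neg_0_le_iff_le linorder_le_cases)
  have 1: "u2 summable_on range int"
    by (subst summable_on_reindex) (auto simp: o_def u2_def u2_nat_summable)
  have i: "inj (\<lambda>n::nat. - int n)" by (auto simp: inj_def)
  have 2: "u2 summable_on range (\<lambda>n. - int n)"
    by (subst summable_on_reindex[OF i]) (auto simp: o_def u2_def u2_nat_summable)
  show ?thesis by (subst U, rule summable_on_union[OF 1 2])
qed

lemma w_summable: "(\<lambda>(j,k). u2 j * u2 k) summable_on (UNIV::(int\<times>int) set)"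
proof -
  have "(\<lambda>(j,k). u2 j * u2 k) summable_on Sigma UNIV (\<lambda>_. UNIV)"
  proof (rule summable_on_SigmaI[where g = "\<lambda>j. u2 j * infsum u2 UNIV"])
    fix x :: int
    show "((\<lambda>y. case (x, y) of (j, k) \<Rightarrow> u2 j * u2 k) has_sum u2 x * infsum u2 UNIV) UNIV"
      using has_sum_cmult_right[OF has_sum_infsum[OF u2_summable], of "u2 x"]
      by simp
  next
    show "(\<lambda>j. u2 j * infsum u2 UNIV) summable_on UNIV"
      by (rule summable_on_cmult_left[OF u2_summable])
  next
    fix x y show "0 \<le> (case (x, y) of (j, k) \<Rightarrow> u2 j * u2 k)" by (simp add: u2_def)
  qed
  thus ?thesis by simp
qed

lemma schwartz_bound: "schwartz a \<Longrightarrow> \<exists>C. \<forall>m n. (1 + real_of_int (\<bar>m\<bar> + \<bar>n\<bar>)) ^ k * cmod (a (m, n)) \<le> C"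
  unfolding schwartz_def by blast

lemma schwartz_abs_summable:
  assumes "schwartz a" shows "(\<lambda>x. norm (a x)) summable_on UNIV"
proof -
  obtain C where C: "\<And>m n. (1 + real_of_int (\<bar>m\<bar> + \<bar>n\<bar>)) ^ 4 * cmod (a (m, n)) \<le> C"
    using schwartz_bound[OF assms, of 4] by blast
  have "(\<lambda>x. C * (case x of (j,k) \<Rightarrow> u2 j * u2 k)) summable_on UNIV"
    by (rule summable_on_cmult_right[OF w_summable])
  thus ?thesis
  proof (rule summable_on_comparison_test)
    fix x :: "int \<times> int"
    obtain m n where x: "x = (m,n)" by fastforce
    have p1: "0 < 1 + real_of_int \<bar>m\<bar>" "0 < 1 + real_of_int \<bar>n\<bar>" by auto
    have le: "(1 + real_of_int \<bar>m\<bar>)^2 * (1 + real_of_int \<bar>n\<bar>)^2 \<le> (1 + real_of_int (\<bar>m\<bar> + \<bar>n\<bar>)) ^ 4"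
    proof -
      have "(1 + real_of_int \<bar>m\<bar>) * (1 + real_of_int \<bar>n\<bar>) \<le> (1 + real_of_int (\<bar>m\<bar> + \<bar>n\<bar>))^2"
        by (simp add: power2_eq_square algebra_simps)
      hence "((1 + real_of_int \<bar>m\<bar>) * (1 + real_of_int \<bar>n\<bar>))^2 \<le> ((1 + real_of_int (\<bar>m\<bar> + \<bar>n\<bar>))^2)^2"
        by (rule power_mono) (use p1 in simp)
      thus ?thesis by (simp add: power_mult_distrib power_mult[symmetric])
    qed
    have "(1 + real_of_int \<bar>m\<bar>)^2 * (1 + real_of_int \<bar>n\<bar>)^2 * cmod (a (m,n)) \<le> C"
      by (rule order_trans[OF mult_right_mono[OF le] C]) simp
    thus "norm (a x) \<le> C * (case x of (j,k) \<Rightarrow> u2 j * u2 k)"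
      using p1 by (simp add: x u2_def field_simps)
  qed simp
qed

lemma schwartz_bdd: "schwartz a \<Longrightarrow> \<exists>B. \<forall>x. norm (a x) \<le> B"
  using schwartz_bound[of a 0] by (auto simp: split_paired_all)

lemma summable_times_bdd:
  assumes "schwartz a" "\<And>x. norm (g x) \<le> B"
  shows "(\<lambda>x. a x * g x) summable_on UNIV"
proof -
  have "(\<lambda>x. norm (a x * g x)) summable_on UNIV"
  proof (rule summable_on_comparison_test)
    show "(\<lambda>x. norm (B * norm (a x))) summable_on UNIV"
      using summable_on_cmult_right[OF schwartz_abs_summable[OF assms(1)], of "\<bar>B\<bar>"] by (simp add: abs_mult)
    fix x
    have "norm (a x * g x) \<le> norm (a x) * B" by (simp add: norm_mult mult_left_mono assms(2))
    also have "\<dots> \<le> norm (B * norm (a x))" by (simp add: mult.commute)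
    finally show "norm (a x * g x) \<le> norm (B * norm (a x))" .
  qed simp
  thus ?thesis by (rule abs_summable_summable)
qed



definition dmul :: "complex \<Rightarrow> complex \<Rightarrow> nct \<Rightarrow> nct" where
  "dmul \<alpha> \<beta> a = (\<lambda>(m,n). (\<alpha> * of_int m + \<beta> * of_int n) * a (m,n))"

lemma dmul_comm: "dmul \<alpha> \<beta> (dmul \<gamma> \<delta> a) = dmul \<gamma> \<delta> (dmul \<alpha> \<beta> a)"
  by (auto simp: dmul_def fun_eq_iff)

lemma dmul_zero: "dmul \<alpha> \<beta> (\<lambda>_. 0) = (\<lambda>_. 0)"
  by (auto simp: dmul_def fun_eq_iff)

lemma schwartz_dmul:
  assumes "schwartz a" shows "schwartz (dmul \<alpha> \<beta> a)"
  unfolding schwartz_def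
proof
  fix k :: nat
  obtain C where C: "\<And>m n. (1 + real_of_int (\<bar>m\<bar> + \<bar>n\<bar>)) ^ Suc k * cmod (a (m, n)) \<le> C"
    using schwartz_bound[OF assms, of "Suc k"] by blast
  show "\<exists>C. \<forall>m n. (1 + real_of_int (\<bar>m\<bar> + \<bar>n\<bar>)) ^ k * cmod (dmul \<alpha> \<beta> a (m, n)) \<le> C"
  proof (intro exI allI)
    fix m n :: int
    let ?s = "1 + real_of_int (\<bar>m\<bar> + \<bar>n\<bar>)"
    have s0: "0 \<le> ?s" by simp
    have "cmod (\<alpha> * of_int m + \<beta> * of_int n) \<le> cmod \<alpha> * \<bar>real_of_int m\<bar> + cmod \<beta> * \<bar>real_of_int n\<bar>"
      by (rule order_trans[OF norm_triangle_ineq]) (simp add: norm_mult)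
    also have "\<dots> \<le> (cmod \<alpha> + cmod \<beta>) * ?s"
      by (simp add: algebra_simps add_mono add_increasing mult_left_mono)
    finally have b: "cmod (\<alpha> * of_int m + \<beta> * of_int n) \<le> (cmod \<alpha> + cmod \<beta>) * ?s" .
    have "?s ^ k * cmod (dmul \<alpha> \<beta> a (m, n)) = ?s ^ k * (cmod (\<alpha> * of_int m + \<beta> * of_int n) * cmod (a (m,n)))"
      by (simp add: dmul_def norm_mult)
    also have "\<dots> \<le> ?s ^ k * ((cmod \<alpha> + cmod \<beta>) * ?s * cmod (a (m,n)))"
      by (intro mult_left_mono mult_right_mono b) auto
    also have "\<dots> = (cmod \<alpha> + cmod \<beta>) * (?s ^ Suc k * cmod (a (m,n)))"
      by (simp add: algebra_simps)
    also have "\<dots> \<le> (cmod \<alpha> + cmod \<beta>) * C"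
      by (intro mult_left_mono C) auto
    finally show "?s ^ k * cmod (dmul \<alpha> \<beta> a (m, n)) \<le> (cmod \<alpha> + cmod \<beta>) * C" .
  qed
qed

lemma summ_term:
  assumes "schwartz a" "schwartz b"
  shows "(\<lambda>(j,k). a (j,k) * b (m - j, n - k) * cis (2 * pi * \<theta> * real_of_int (k * (m - j)))) summable_on UNIV"
proof -
  obtain B where B: "\<And>x. norm (b x) \<le> B" using schwartz_bdd[OF assms(2)] by blast
  have "(\<lambda>x. a x * (case x of (j,k) \<Rightarrow> b (m - j, n - k) * cis (2 * pi * \<theta> * real_of_int (k * (m - j))))) summable_on UNIV"
    by (rule summable_times_bdd[OF assms(1), of _ B]) (auto simp: norm_mult B split: prod.splits)
  thus ?thesis by (simp add: split_def mult.assoc)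
qed

lemma leibniz:
  assumes "schwartz a" "schwartz b"
  shows "dmul \<alpha> \<beta> (nct_mult \<theta> a b) = (\<lambda>x. nct_mult \<theta> (dmul \<alpha> \<beta> a) b x + nct_mult \<theta> a (dmul \<alpha> \<beta> b) x)"
proof (rule ext, clarify)
  fix m n :: int
  let ?c = "\<lambda>j k. cis (2 * pi * \<theta> * real_of_int (k * (m - j)))"
  have "dmul \<alpha> \<beta> (nct_mult \<theta> a b) (m,n) = (\<alpha> * of_int m + \<beta> * of_int n) *
      infsum (\<lambda>(j,k). a (j,k) * b (m - j, n - k) * ?c j k) UNIV"
    by (simp add: dmul_def nct_mult_def)
  also have "\<dots> = infsum (\<lambda>x. (\<alpha> * of_int m + \<beta> * of_int n) * (case x of (j,k) \<Rightarrow> a (j,k) * b (m - j, n - k) * ?c j k)) UNIV"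
    by (rule infsum_cmult_right'[symmetric])
  also have "\<dots> = infsum (\<lambda>x. (case x of (j,k) \<Rightarrow> dmul \<alpha> \<beta> a (j,k) * b (m - j, n - k) * ?c j k)
        + (case x of (j,k) \<Rightarrow> a (j,k) * dmul \<alpha> \<beta> b (m - j, n - k) * ?c j k)) UNIV"
    by (rule infsum_cong) (auto simp: dmul_def algebra_simps)
  also have "\<dots> = infsum (\<lambda>(j,k). dmul \<alpha> \<beta> a (j,k) * b (m - j, n - k) * ?c j k) UNIV
      + infsum (\<lambda>(j,k). a (j,k) * dmul \<alpha> \<beta> b (m - j, n - k) * ?c j k) UNIV"
    by (rule infsum_add[OF summ_term[OF schwartz_dmul[OF assms(1)] assms(2)] summ_term[OF assms(1) schwartz_dmul[OF assms(2)]]])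
  finally show "dmul \<alpha> \<beta> (nct_mult \<theta> a b) (m,n) = nct_mult \<theta> (dmul \<alpha> \<beta> a) b (m,n) + nct_mult \<theta> a (dmul \<alpha> \<beta> b) (m,n)"
    by (simp add: nct_mult_def)
qed

lemma mult_zero_left: "nct_mult \<theta> (\<lambda>_. 0) b = (\<lambda>_. 0)"
  by (simp add: nct_mult_def fun_eq_iff split_def)
lemma mult_zero_right: "nct_mult \<theta> a (\<lambda>_. 0) = (\<lambda>_. 0)"
  by (simp add: nct_mult_def fun_eq_iff split_def)

lemma mult_scale_right: "nct_mult \<theta> a (\<lambda>x. c * b x) = (\<lambda>x. c * nct_mult \<theta> a b x)"
proof (rule ext, clarify)
  fix m n :: int
  have "nct_mult \<theta> a (\<lambda>x. c * b x) (m,n) = infsum (\<lambda>x. c * (case x of (j,k) \<Rightarrow> a (j, k) * b (m - j, n - k) * cis (2 * pi * \<theta> * real_of_int (k * (m - j))))) UNIV"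
    by (simp add: nct_mult_def split_def algebra_simps)
  thus "nct_mult \<theta> a (\<lambda>x. c * b x) (m,n) = c * nct_mult \<theta> a b (m,n)"
    by (simp add: infsum_cmult_right' nct_mult_def)
qed

lemma mult_scale_left: "nct_mult \<theta> (\<lambda>x. c * a x) b = (\<lambda>x. c * nct_mult \<theta> a b x)"
proof (rule ext, clarify)
  fix m n :: int
  have "nct_mult \<theta> (\<lambda>x. c * a x) b (m,n) = infsum (\<lambda>x. c * (case x of (j,k) \<Rightarrow> a (j, k) * b (m - j, n - k) * cis (2 * pi * \<theta> * real_of_int (k * (m - j))))) UNIV"
    by (simp add: nct_mult_def split_def algebra_simps)
  thus "nct_mult \<theta> (\<lambda>x. c * a x) b (m,n) = c * nct_mult \<theta> a b (m,n)"
    by (simp add: infsum_cmult_right' nct_mult_def)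
qed



lemma star_mult: "nct_star \<theta> (nct_mult \<theta> a b) = nct_mult \<theta> (nct_star \<theta> b) (nct_star \<theta> a)"
proof (rule ext, clarify)
  fix m n :: int
  let ?g = "\<lambda>(j,k). cnj (a (j,k) * b (- m - j, - n - k) * cis (2 * pi * \<theta> * real_of_int (k * (- m - j))))
                 * cis (2 * pi * \<theta> * real_of_int (m * n))"
  let ?h = "\<lambda>(j,k). nct_star \<theta> b (j,k) * nct_star \<theta> a (m - j, n - k) * cis (2 * pi * \<theta> * real_of_int (k * (m - j)))"
  have "nct_star \<theta> (nct_mult \<theta> a b) (m,n) = infsum ?g UNIV"
    unfolding nct_star_def nct_mult_def
    by (simp add: infsum_cmult_left'[symmetric] split_def infsum_cnj[symmetric] del: infsum_cnj)
  also have "\<dots> = infsum ?h UNIV"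
  proof (rule infsum_reindex_bij_witness[where j = "\<lambda>(x,y). (x+m, y+n)" and i = "\<lambda>(x,y). (x-m, y-n)"])
    fix x :: "int \<times> int"
    obtain j k where x: "x = (j,k)" by fastforce
    have ph: "2 * pi * \<theta> * real_of_int ((j+m) * (k+n)) + 2 * pi * \<theta> * real_of_int (j * k)
       + 2 * pi * \<theta> * real_of_int ((k + n) * (- j))
       = - (2 * pi * \<theta> * real_of_int (k * (- m - j))) + 2 * pi * \<theta> * real_of_int (m * n)"
      by (simp add: algebra_simps)
    have "?h (j+m, k+n) = cnj (a (j,k)) * cnj (b (- m - j, - n - k)) *
       (cis (2 * pi * \<theta> * real_of_int ((j+m) * (k+n))) * cis (2 * pi * \<theta> * real_of_int (j * k))
       * cis (2 * pi * \<theta> * real_of_int ((k + n) * (- j))))"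
      apply (simp add: nct_star_def algebra_simps)
      apply (rule disjI2, rule arg_cong[where f=b], simp)
      done
    also have "\<dots> = cnj (a (j,k)) * cnj (b (- m - j, - n - k)) *
       (cnj (cis (2 * pi * \<theta> * real_of_int (k * (- m - j)))) * cis (2 * pi * \<theta> * real_of_int (m * n)))"
      by (simp only: cis_mult ph cis_cnj)
    also have "\<dots> = ?g (j,k)" by (simp add: algebra_simps)
    finally show "?h ((\<lambda>(x,y). (x+m, y+n)) x) = ?g x" by (simp add: x)
  qed auto
  finally show "nct_star \<theta> (nct_mult \<theta> a b) (m,n) = nct_mult \<theta> (nct_star \<theta> b) (nct_star \<theta> a) (m,n)"
    by (simp add: nct_mult_def)
qed

lemma star_zero: "nct_star \<theta> (\<lambda>_. 0) = (\<lambda>_. 0)"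
  by (simp add: nct_star_def fun_eq_iff)

definition cc :: "complex \<Rightarrow> complex" where "cc \<tau> = 1 / (\<tau> - cnj \<tau>)"

lemma dtau_dmul: "dtau \<tau> a = dmul (cc \<tau> * (- cnj \<tau>) * (2 * of_real pi * \<i>)) (cc \<tau> * (2 * of_real pi * \<i>)) a"
  by (auto simp: dtau_def dmul_def nct_partial_def cc_def fun_eq_iff algebra_simps)

lemma dbartau_dmul: "dbartau \<tau> a = dmul (cc \<tau> * \<tau> * (2 * of_real pi * \<i>)) (- cc \<tau> * (2 * of_real pi * \<i>)) a"
  by (auto simp: dbartau_def dmul_def nct_partial_def cc_def fun_eq_iff algebra_simps)

lemma cnj_cc: "cnj (cc \<tau>) = - cc \<tau>"
  by (simp add: cc_def) (metis minus_diff_eq divide_minus_right)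

lemma star_dmul: "nct_star \<theta> (dmul \<alpha> \<beta> a) = dmul (- cnj \<alpha>) (- cnj \<beta>) (nct_star \<theta> a)"
  by (auto simp: dmul_def nct_star_def fun_eq_iff algebra_simps)

lemma star_dtau: "nct_star \<theta> (dtau \<tau> a) = dbartau \<tau> (nct_star \<theta> a)"
  unfolding dtau_dmul dbartau_dmul star_dmul by (simp add: cnj_cc)

lemma star_dbartau: "nct_star \<theta> (dbartau \<tau> a) = dtau \<tau> (nct_star \<theta> a)"
  unfolding dtau_dmul dbartau_dmul star_dmul by (simp add: cnj_cc)

lemma laplacian_eq:
  assumes "Im \<tau> > 0"
  shows "nct_laplacian \<tau> a = (\<lambda>x. 4 * dtau \<tau> (dbartau \<tau> a) x)"
proof (rule ext, clarify)
  fix m n :: int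
  obtain x y where t: "\<tau> = Complex x y" by (metis complex.collapse)
  have y: "y > 0" using assms t by simp
  have tc: "\<tau> - cnj \<tau> = 2 * \<i> * of_real y" by (simp add: t complex_eq_iff)
  have c2: "(cmod \<tau>)\<^sup>2 = x^2 + y^2" by (simp add: t cmod_def)
  let ?K = "- 4 * of_real (pi^2 / y^2 * ((x^2+y^2)*m^2 - 2*x*m*n + n^2)) :: complex"
  have L: "nct_laplacian \<tau> a (m,n) = ?K * a (m,n)"
    unfolding nct_laplacian_def nct_partial_def ginv_def
    using y
    apply (simp add: c2[unfolded t] t)
    apply (simp add: field_simps power2_eq_square)
    done
  have R: "4 * dtau \<tau> (dbartau \<tau> a) (m,n) = ?K * a (m,n)"
    unfolding dtau_def dbartau_def nct_partial_def
    using y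
    apply (simp add: t Complex_eq complex_cnj)
    apply (simp add: field_simps power2_eq_square)
    done
  show "nct_laplacian \<tau> a (m,n) = 4 * dtau \<tau> (dbartau \<tau> a) (m,n)" using L R by simp
qed



lemma key:
  assumes p: "schwartz p"
    and h1: "nct_mult \<theta> (dmul a1 b1 p) p = (\<lambda>_. 0)"
    and h2: "nct_mult \<theta> p (dmul a2 b2 p) = (\<lambda>_. 0)"
  shows "nct_mult \<theta> p (dmul a1 b1 (dmul a2 b2 p)) = nct_mult \<theta> (dmul a1 b1 (dmul a2 b2 p)) p"
proof -
  have e1: "dmul a1 b1 (nct_mult \<theta> p (dmul a2 b2 p)) = (\<lambda>x. nct_mult \<theta> (dmul a1 b1 p) (dmul a2 b2 p) x + nct_mult \<theta> p (dmul a1 b1 (dmul a2 b2 p)) x)"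
    by (rule leibniz[OF p schwartz_dmul[OF p]])
  have e2: "dmul a2 b2 (nct_mult \<theta> (dmul a1 b1 p) p) = (\<lambda>x. nct_mult \<theta> (dmul a2 b2 (dmul a1 b1 p)) p x + nct_mult \<theta> (dmul a1 b1 p) (dmul a2 b2 p) x)"
    by (rule leibniz[OF schwartz_dmul[OF p] p])
  have z1: "(\<lambda>x. nct_mult \<theta> (dmul a1 b1 p) (dmul a2 b2 p) x + nct_mult \<theta> p (dmul a1 b1 (dmul a2 b2 p)) x) = (\<lambda>_. 0)"
    using e1 h2 dmul_zero by metis
  have z2: "(\<lambda>x. nct_mult \<theta> (dmul a2 b2 (dmul a1 b1 p)) p x + nct_mult \<theta> (dmul a1 b1 p) (dmul a2 b2 p) x) = (\<lambda>_. 0)"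
    using e2 h1 dmul_zero by metis
  have f1: "nct_mult \<theta> p (dmul a1 b1 (dmul a2 b2 p)) x = - nct_mult \<theta> (dmul a1 b1 p) (dmul a2 b2 p) x" for x
    using fun_cong[OF z1, of x] by (simp add: eq_neg_iff_add_eq_0 add.commute)
  have f2: "nct_mult \<theta> (dmul a1 b1 (dmul a2 b2 p)) p x = - nct_mult \<theta> (dmul a1 b1 p) (dmul a2 b2 p) x" for x
    using fun_cong[OF z2, of x] by (simp add: eq_neg_iff_add_eq_0 dmul_comm)
  show ?thesis using f1 f2 by (simp add: fun_eq_iff)
qed

theorem mainTheorem2:
  fixes \<theta> :: real and \<tau> :: complex and p :: nct
  assumes "Im \<tau> > 0"
    and "schwartz p"
    and "p = nct_mult \<theta> p p"
    and "p = nct_star \<theta> p"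
    and "nct_mult \<theta> (dbartau \<tau> p) p = (\<lambda>_. 0)
         \<or> nct_mult \<theta> p (dtau \<tau> p) = (\<lambda>_. 0)
         \<or> nct_mult \<theta> (dtau \<tau> p) p = (\<lambda>_. 0)
         \<or> nct_mult \<theta> p (dbartau \<tau> p) = (\<lambda>_. 0)"
  shows "(\<lambda>x. nct_mult \<theta> p (nct_laplacian \<tau> p) x - nct_mult \<theta> (nct_laplacian \<tau> p) p x) = (\<lambda>_. 0)"
proof -
  note sp = assms(4)
  have s1: "nct_star \<theta> (nct_mult \<theta> (dbartau \<tau> p) p) = nct_mult \<theta> p (dtau \<tau> p)"
    by (simp add: star_mult star_dbartau sp[symmetric])
  have s2: "nct_star \<theta> (nct_mult \<theta> p (dtau \<tau> p)) = nct_mult \<theta> (dbartau \<tau> p) p"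
    by (simp add: star_mult star_dtau sp[symmetric])
  have s3: "nct_star \<theta> (nct_mult \<theta> (dtau \<tau> p) p) = nct_mult \<theta> p (dbartau \<tau> p)"
    by (simp add: star_mult star_dtau sp[symmetric])
  have s4: "nct_star \<theta> (nct_mult \<theta> p (dbartau \<tau> p)) = nct_mult \<theta> (dtau \<tau> p) p"
    by (simp add: star_mult star_dbartau sp[symmetric])
  let ?X = "dtau \<tau> (dbartau \<tau> p)"
  have comm: "nct_mult \<theta> p ?X = nct_mult \<theta> ?X p"
  proof -
    have "(nct_mult \<theta> (dbartau \<tau> p) p = (\<lambda>_. 0) \<and> nct_mult \<theta> p (dtau \<tau> p) = (\<lambda>_. 0))
       \<or> (nct_mult \<theta> (dtau \<tau> p) p = (\<lambda>_. 0) \<and> nct_mult \<theta> p (dbartau \<tau> p) = (\<lambda>_. 0))"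
      using assms(5) s1 s2 s3 s4 star_zero by metis
    thus ?thesis
    proof
      assume h: "nct_mult \<theta> (dbartau \<tau> p) p = (\<lambda>_. 0) \<and> nct_mult \<theta> p (dtau \<tau> p) = (\<lambda>_. 0)"
      have "?X = dbartau \<tau> (dtau \<tau> p)" unfolding dtau_dmul dbartau_dmul by (rule dmul_comm)
      thus ?thesis using key[OF assms(2), of \<theta>] h unfolding dtau_dmul dbartau_dmul by metis
    next
      assume h: "nct_mult \<theta> (dtau \<tau> p) p = (\<lambda>_. 0) \<and> nct_mult \<theta> p (dbartau \<tau> p) = (\<lambda>_. 0)"
      thus ?thesis using key[OF assms(2), of \<theta>] unfolding dtau_dmul dbartau_dmul by metis
    qed
  qed
  have L: "nct_laplacian \<tau> p = (\<lambda>x. 4 * ?X x)" by (rule laplacian_eq[OF assms(1)])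
  show ?thesis unfolding L mult_scale_left mult_scale_right comm by simp
qed

end
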